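(* Let $D$ be an $m\times m$ differential matrix over a field $\mathbb F$ that is block-superdiagonal with respect to a partition of $\{1,\dots,m\}$ into consecutive intervals $I_1,\dots,I_k$ (in increasing order). Then there exist a nondegenerate filtered complex over $\mathbb F$ and an adapted basis of it, in which the basis elements indexed by $I_j$ have degree $j$ for each $j$, such that the matrix of the colimit boundary with respect to this adapted basis is $D$.
   Context: A differential matrix is a square matrix $D$ with $D^2=0$. It is block-superdiagonal with respect to the partition $I_1,\dots,I_k$ if $D_{ab}=0$ whenever $a\in I_i$, $b\in I_j$ with $j\ne i+1$. A complex is a family $(V_n,\partial_n)_{n\in\mathbb Z}$ of finite-dimensional $\mathbb F$-vector spaces with $\partial_n:V_n\to V_{n-1}$, $\partial_{n-1}\partial_n=0$, all but finitely many $\partial_n$ isomorphisms. A filtered complex is a family of complexes $({}_pV_\bullet)_{p\in\mathbb Z}$ with each ${}_pV_\bullet$ a subcomplex of ${}_{p+1}V_\bullet$, ${}_pV_\bullet=0$ for $p$ sufficiently small, and ${}_pV_\bullet={}_{p+1}V_\bullet$ for all but finitely many $p$; its colimit $V_\bullet$ is ${}_pV_\bullet$ for large $p$; $V=\bigoplus_nV_n$ and the colimit boundary is $\partial=\bigoplus_n\partial_n:V\to V$. A vector has pure degree $n$ if it lies in $V_n$; the level of a nonzero $v\in V_n$ is the least $p$ with $v\in{}_pV_n$. An adapted basis is a basis of $V$ such that (i) every element has pure degree; (ii) for all $n,p$, ${}_pV_n$ is spanned by the basis elements of degree $n$ and level $\le p$; (iii) the basis is ordered so that degree is nondecreasing and,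 within each degree, level is nondecreasing. The filtered complex is nondegenerate if $\dim{}_{p+1}V_n\le\dim{}_pV_n+1$ for all $p,n$. The matrix of $\partial$ has as column $j$ the coordinates of $\partial$ applied to the $j$-th basis element. *)

theory Defs
  imports Complex_Main "HOL-Library.Function_Algebras"
begin

text \<open>Ambient vector space: F^N, i.e. functions nat => F with pointwise scaling.
  All spaces V_n of the filtered complexes we construct are subspaces of this
  ambient space; the V_n (for different n) are required to be independent,
  so that V = (direct sum of the V_n) is their internal direct sum.\<close>

definition fscale :: "'a::field \<Rightarrow> (nat \<Rightarrow> 'a) \<Rightarrow> (nat \<Rightarrow> 'a)" where
  "fscale c f = (\<lambda>i. c * f i)"

lemma vector_space_fscale: "vector_space (fscale :: 'a::field \<Rightarrow> _)"
  by unfold_locales (simp_all add: fscale_def algebra_simps fun_eq_iff plus_fun_def)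

definition is_complex ::
  "('a::field \<Rightarrow> 'v::ab_group_add \<Rightarrow> 'v) \<Rightarrow> (int \<Rightarrow> 'v set) \<Rightarrow> (int \<Rightarrow> 'v \<Rightarrow> 'v) \<Rightarrow> bool" where
  "is_complex sc V d \<longleftrightarrow>
     (\<forall>n. module.subspace sc (V n)) \<and>
     (\<forall>n. \<exists>B. finite B \<and> B \<subseteq> V n \<and> module.span sc B = V n) \<and>
     (\<forall>n. \<forall>x\<in>V n. d n x \<in> V (n - 1)) \<and>
     (\<forall>n. \<forall>x\<in>V n. \<forall>y\<in>V n. d n (x + y) = d n x + d n y) \<and>
     (\<forall>n. \<forall>c. \<forall>x\<in>V n. d n (sc c x) = sc c (d n x)) \<and>
     (\<forall>n. \<forall>x\<in>V n. d (n - 1) (d n x) = 0) \<and>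
     finite {n. \<not> bij_betw (d n) (V n) (V (n - 1))}"

text \<open>Colimit of a filtered complex: FV p n is the space {}_pV_n.  Since the
  filtration is increasing and eventually constant, the colimit in degree n is
  the union over p (= FV p n for p large).\<close>

definition colim :: "(int \<Rightarrow> int \<Rightarrow> 'v set) \<Rightarrow> int \<Rightarrow> 'v set" where
  "colim FV n = (\<Union>p. FV p n)"

text \<open>The total space V = direct sum of the V_n (realised as an internal sum).\<close>

definition total_space ::
  "('a::field \<Rightarrow> 'v::ab_group_add \<Rightarrow> 'v) \<Rightarrow> (int \<Rightarrow> int \<Rightarrow> 'v set) \<Rightarrow> 'v set" where
  "total_space sc FV = module.span sc (\<Union>n. colim FV n)"

text \<open>All the complexes FV p share the boundary maps d, which
  expresses that each FV p is a subcomplex of FV (p+1).  We also require the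
  degree-n colimit spaces to be independent, so that their sum is direct.\<close>

definition filtered_complex ::
  "('a::field \<Rightarrow> 'v::ab_group_add \<Rightarrow> 'v) \<Rightarrow> (int \<Rightarrow> int \<Rightarrow> 'v set) \<Rightarrow> (int \<Rightarrow> 'v \<Rightarrow> 'v) \<Rightarrow> bool" where
  "filtered_complex sc FV d \<longleftrightarrow>
     (\<forall>p. is_complex sc (FV p) d) \<and>
     (\<forall>p n. FV p n \<subseteq> FV (p + 1) n) \<and>
     (\<exists>p0. \<forall>p\<le>p0. \<forall>n. FV p n = {0}) \<and>
     finite {p. FV p \<noteq> FV (p + 1)} \<and>
     (\<forall>N x. finite N \<longrightarrow> (\<forall>n\<in>N. x n \<in> colim FV n) \<longrightarrow>
        (\<Sum>n\<in>N. x n) = 0 \<longrightarrow> (\<forall>n\<in>N. x n = 0))"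

definition nondegenerate ::
  "('a::field \<Rightarrow> 'v::ab_group_add \<Rightarrow> 'v) \<Rightarrow> (int \<Rightarrow> int \<Rightarrow> 'v set) \<Rightarrow> bool" where
  "nondegenerate sc FV \<longleftrightarrow>
     (\<forall>p n. vector_space.dim sc (FV (p + 1) n) \<le> vector_space.dim sc (FV p n) + 1)"

definition level :: "(int \<Rightarrow> int \<Rightarrow> 'v set) \<Rightarrow> int \<Rightarrow> 'v \<Rightarrow> int" where
  "level FV n v = (LEAST p. v \<in> FV p n)"

definition adapted_basis ::
  "('a::field \<Rightarrow> 'v::ab_group_add \<Rightarrow> 'v) \<Rightarrow> (int \<Rightarrow> int \<Rightarrow> 'v set) \<Rightarrow> nat \<Rightarrow>
   (nat \<Rightarrow> int) \<Rightarrow> (nat \<Rightarrow> 'v) \<Rightarrow> bool" where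
  "adapted_basis sc FV m deg b \<longleftrightarrow>
     \<comment> \<open>basis of V\<close>
     inj_on b {..<m} \<and>
     \<not> module.dependent sc (b ` {..<m}) \<and>
     module.span sc (b ` {..<m}) = total_space sc FV \<and>
     \<comment> \<open>(i) pure degree\<close>
     (\<forall>i<m. b i \<in> colim FV (deg i)) \<and>
     \<comment> \<open>(ii) filtration spanned by basis elements\<close>
     (\<forall>n p. FV p n = module.span sc
        (b ` {i. i < m \<and> deg i = n \<and> level FV n (b i) \<le> p})) \<and>
     \<comment> \<open>(iii) ordering\<close>
     (\<forall>i j. i \<le> j \<longrightarrow> j < m \<longrightarrow>
        deg i \<le> deg j \<and> (deg i = deg j \<longrightarrow> level FV (deg i) (b i) \<le> level FV (deg j) (b j)))"

end

theory Submission
  imports Defs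
begin

interpretation V: vector_space "fscale :: 'a::field \<Rightarrow> (nat \<Rightarrow> 'a) \<Rightarrow> _"
  by (rule vector_space_fscale)

lemma sum_fun_apply: "(\<Sum>a\<in>A. (f a :: nat \<Rightarrow> 'b::comm_monoid_add)) x = (\<Sum>a\<in>A. f a x)"
  by (induction A rule: infinite_finite_induct) auto

definition ee :: "nat \<Rightarrow> nat \<Rightarrow> 'a::field" where
  "ee i = (\<lambda>a. if a = i then 1 else 0)"

definition supp_on :: "nat set \<Rightarrow> (nat \<Rightarrow> 'a::field) set" where
  "supp_on S = {x. \<forall>a. x a \<noteq> 0 \<longrightarrow> a \<in> S}"

lemma subspace_supp_on: "V.subspace (supp_on S)"
  unfolding V.subspace_def supp_on_def fscale_def by (auto simp: plus_fun_def) (metis add.left_neutral)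

lemma ee_in: "i \<in> S \<Longrightarrow> (ee i :: nat \<Rightarrow> 'a::field) \<in> supp_on S"
  by (auto simp: ee_def supp_on_def)

lemma span_ee:
  assumes "finite S"
  shows "V.span (ee ` S :: (nat \<Rightarrow> 'a::field) set) = supp_on S"
proof
  show "V.span (ee ` S) \<subseteq> supp_on S"
    by (rule V.span_minimal) (auto intro: ee_in subspace_supp_on)
next
  show "supp_on S \<subseteq> V.span (ee ` S :: (nat \<Rightarrow> 'a::field) set)"
  proof
    fix x :: "nat \<Rightarrow> 'a" assume x: "x \<in> supp_on S"
    have "x = (\<Sum>a\<in>S. fscale (x a) (ee a))"
    proof
      fix b
      have "(\<Sum>a\<in>S. fscale (x a) (ee a)) b = (\<Sum>a\<in>S. if a = b then x a else 0)"
        unfolding sum_fun_apply by (auto simp: fscale_def ee_def intro!: sum.cong)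
      also have "\<dots> = (if b \<in> S then x b else 0)"
        using assms by (simp add: sum.delta')
      also have "\<dots> = x b" using x by (auto simp: supp_on_def)
      finally show "x b = (\<Sum>a\<in>S. fscale (x a) (ee a)) b" by simp
    qed
    also have "\<dots> \<in> V.span (ee ` S)"
      by (intro V.span_sum V.span_scale V.span_base) auto
    finally show "x \<in> V.span (ee ` S)" .
  qed
qed

lemma ee_inj: "inj_on (ee :: nat \<Rightarrow> nat \<Rightarrow> 'a::field) S"
  by (auto simp: inj_on_def ee_def fun_eq_iff)

lemma ee_indep: "\<not> V.dependent (ee ` S :: (nat \<Rightarrow> 'a::field) set)"
proof
  assume "V.dependent (ee ` S :: (nat \<Rightarrow> 'a::field) set)"
  then obtain t u where t: "finite t" "t \<subseteq> ee ` S"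
    and s: "(\<Sum>v\<in>t. fscale (u v) v) = (0 :: nat \<Rightarrow> 'a)" and v: "\<exists>v\<in>t. u v \<noteq> 0"
    unfolding V.dependent_explicit by blast
  from v obtain v where vt: "v \<in> t" and uv: "u v \<noteq> 0" by blast
  from vt t obtain i where vi: "v = ee i" by blast
  have "0 = (\<Sum>w\<in>t. fscale (u w) w) i" using s by simp
  also have "\<dots> = (\<Sum>w\<in>t. if w = v then u w else 0)"
    unfolding sum_fun_apply
  proof (intro sum.cong refl)
    fix w assume "w \<in> t"
    with t obtain j where wj: "w = ee j" by blast
    show "fscale (u w) w i = (if w = v then u w else 0)"
      using wj vi inj_onD[OF ee_inj[where 'a='a and S=UNIV], of i j] by (auto simp: fscale_def ee_def)
  qed
  also have "\<dots> = u v" using t vt by (simp add: sum.delta')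
  finally show False using uv by simp
qed

lemma dim_span_ee: "finite S \<Longrightarrow> V.dim (ee ` S :: (nat \<Rightarrow> 'a::field) set) = card S"
  by (simp add: V.dim_eq_card_independent[OF ee_indep] card_image[OF ee_inj])

theorem lemma4p8:
  fixes D :: "nat \<Rightarrow> nat \<Rightarrow> 'a::field" and m k :: nat and blk :: "nat \<Rightarrow> nat"
  assumes differential: "\<forall>a<m. \<forall>c<m. (\<Sum>b<m. D a b * D b c) = 0"
    and blk_range: "\<forall>i<m. 1 \<le> blk i \<and> blk i \<le> k"
    and blk_mono: "\<forall>i j. i \<le> j \<longrightarrow> j < m \<longrightarrow> blk i \<le> blk j"
    and blk_nonempty: "\<forall>j\<in>{1..k}. \<exists>i<m. blk i = j"
    and superdiag: "\<forall>a<m. \<forall>b<m. blk b \<noteq> blk a + 1 \<longrightarrow> D a b = 0"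
  shows "\<exists>(FV :: int \<Rightarrow> int \<Rightarrow> (nat \<Rightarrow> 'a) set) d b.
           filtered_complex fscale FV d \<and> nondegenerate fscale FV \<and>
           adapted_basis fscale FV m (\<lambda>i. int (blk i)) b \<and>
           (\<forall>j<m. d (int (blk j)) (b j) = (\<Sum>i<m. fscale (D i j) (b i)))"
proof -
  define S where "S p n = {i. i < m \<and> int (blk i) = n \<and> int i \<le> p}" for p n
  define FV :: "int \<Rightarrow> int \<Rightarrow> (nat \<Rightarrow> 'a) set" where "FV p n = supp_on (S p n)" for p n
  define d :: "int \<Rightarrow> (nat \<Rightarrow> 'a) \<Rightarrow> (nat \<Rightarrow> 'a)"
    where "d n x = (\<lambda>a. if a < m then \<Sum>c<m. D a c * x c else 0)" for n x
  define b :: "nat \<Rightarrow> nat \<Rightarrow> 'a" where "b = ee"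
  have finS: "finite (S p n)" for p n unfolding S_def by auto
  have FVspan: "FV p n = V.span (b ` S p n)" for p n
    by (simp add: FV_def b_def span_ee finS)
  have ee_FV: "ee i \<in> FV p n \<longleftrightarrow> i \<in> S p n" for i p n
    by (auto simp: FV_def supp_on_def ee_def)
  have lt: "a < c" if "a < m" "c < m" "blk c = blk a + 1" for a c
  proof (rule ccontr)
    assume "\<not> a < c"
    hence "c \<le> a" by simp
    hence "blk c \<le> blk a" using blk_mono that(1) by blast
    thus False using that(3) by simp
  qed
  have level: "level FV (int (blk i)) (ee i) = int i" if "i < m" for i
    unfolding level_def ee_FV S_def using that by (intro Least_equality) auto
  have dmap: "d n x \<in> FV p (n - 1)" if "x \<in> FV p n" for p n x
    unfolding FV_def supp_on_def
  proof (intro CollectI allI impI)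
    fix a assume nz: "d n x a \<noteq> 0"
    hence am: "a < m" by (auto simp: d_def split: if_splits)
    with nz have "(\<Sum>c<m. D a c * x c) \<noteq> 0" by (simp add: d_def)
    then obtain c where c: "c < m" "D a c * x c \<noteq> 0" by (meson lessThan_iff sum.neutral)
    hence cS: "c \<in> S p n" using that by (auto simp: FV_def supp_on_def)
    have bc: "blk c = blk a + 1" using superdiag am c by auto
    moreover have "a < c" using lt[OF am c(1) bc] .
    ultimately show "a \<in> S p (n - 1)" using cS am by (auto simp: S_def)
  qed
  have dd: "d (n - 1) (d n x) = 0" for n x
  proof
    fix a
    show "d (n - 1) (d n x) a = 0 a"
    proof (cases "a < m")
      case True
      have "(\<Sum>c<m. D a c * (\<Sum>e<m. D c e * x e)) = (\<Sum>c<m. \<Sum>e<m. D a c * D c e * x e)"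
        by (simp add: sum_distrib_left mult.assoc)
      also have "\<dots> = (\<Sum>e<m. \<Sum>c<m. D a c * D c e * x e)"
        by (rule sum.swap)
      also have "\<dots> = (\<Sum>e<m. (\<Sum>c<m. D a c * D c e) * x e)"
        by (simp add: sum_distrib_right)
      also have "\<dots> = 0" using differential True by simp
      finally show ?thesis using True by (simp add: d_def)
    qed (simp add: d_def)
  qed
  have dadd: "d n (x + y) = d n x + d n y" for n x y
    by (auto simp: d_def fun_eq_iff algebra_simps sum.distrib)
  have dsc: "d n (fscale c x) = fscale c (d n x)" for n c x
    by (auto simp: d_def fun_eq_iff fscale_def sum_distrib_left algebra_simps)
  have d0: "d n 0 = 0" for n by (simp add: d_def fun_eq_iff)
  have FV0: "FV p n = {0}" if "S p n = {}" for p n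
    using that by (auto simp: FV_def supp_on_def fun_eq_iff)
  have nbij: "{n. \<not> bij_betw (d n) (FV p n) (FV p (n - 1))} \<subseteq>
      (\<lambda>i. int (blk i)) ` {..<m} \<union> (\<lambda>i. int (blk i) + 1) ` {..<m}" for p
  proof
    fix n assume n: "n \<in> {n. \<not> bij_betw (d n) (FV p n) (FV p (n - 1))}"
    show "n \<in> (\<lambda>i. int (blk i)) ` {..<m} \<union> (\<lambda>i. int (blk i) + 1) ` {..<m}"
    proof (rule ccontr)
      assume "\<not> ?thesis"
      hence "S p n = {}" "S p (n - 1) = {}" by (auto simp: S_def image_iff) (metis diff_add_cancel lessThan_iff)
      hence "FV p n = {0}" "FV p (n - 1) = {0}" using FV0 by auto
      thus False using n d0 by (simp add: bij_betw_def)
    qed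
  qed
  have cplx: "is_complex fscale (FV p) d" for p
    unfolding is_complex_def
  proof (intro conjI allI ballI)
    fix n show "V.subspace (FV p n)" by (simp add: FV_def subspace_supp_on)
    show "\<exists>B. finite B \<and> B \<subseteq> FV p n \<and> V.span B = FV p n"
      by (intro exI[of _ "b ` S p n"]) (auto simp: FVspan finS intro: V.span_base)
  next
    show "finite {n. \<not> bij_betw (d n) (FV p n) (FV p (n - 1))}"
      by (rule finite_subset[OF nbij]) auto
  qed (auto simp: dmap dadd dsc dd)
  have colim_sub: "x \<in> colim FV n \<Longrightarrow> x a \<noteq> 0 \<Longrightarrow> a < m \<and> int (blk a) = n" for x n a
    by (auto simp: colim_def FV_def supp_on_def S_def)
  have fc: "filtered_complex fscale FV d"
    unfolding filtered_complex_def
  proof (intro conjI allI impI)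
    show "FV p n \<subseteq> FV (p + 1) n" for p n
      by (auto simp: FV_def supp_on_def S_def)
    show "\<exists>p0. \<forall>p\<le>p0. \<forall>n. FV p n = {0}"
      by (intro exI[of _ "-1"] allI impI FV0) (auto simp: S_def)
    have "{p. FV p \<noteq> FV (p + 1)} \<subseteq> (\<lambda>i. int i - 1) ` {..<m}"
    proof
      fix p assume "p \<in> {p. FV p \<noteq> FV (p + 1)}"
      then obtain n where "FV p n \<noteq> FV (p + 1) n" by (auto simp: fun_eq_iff)
      hence "S p n \<noteq> S (p + 1) n" by (auto simp: FV_def)
      moreover have "S p n \<subseteq> S (p + 1) n" by (auto simp: S_def)
      ultimately obtain i where "i \<in> S (p + 1) n" "i \<notin> S p n" by blast
      hence "i < m" "int i = p + 1" by (auto simp: S_def)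
      thus "p \<in> (\<lambda>i. int i - 1) ` {..<m}" by (auto simp: image_iff intro!: bexI[of _ i])
    qed
    thus "finite {p. FV p \<noteq> FV (p + 1)}" by (rule finite_subset) auto
  next
    fix N :: "int set" and x :: "int \<Rightarrow> nat \<Rightarrow> 'a"
    assume fin: "finite N" and xc: "\<forall>n\<in>N. x n \<in> colim FV n" and s: "(\<Sum>n\<in>N. x n) = 0"
    show "\<forall>n\<in>N. x n = 0"
    proof (intro ballI ext)
      fix n a assume nN: "n \<in> N"
      show "x n a = 0 a"
      proof (rule ccontr)
        assume nz: "x n a \<noteq> 0 a"
        hence na: "int (blk a) = n" using colim_sub xc nN by auto
        have "0 = (\<Sum>n\<in>N. x n) a" using s by simp
        also have "\<dots> = (\<Sum>n'\<in>N. if n' = n then x n' a else 0)"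
          unfolding sum_fun_apply
        proof (intro sum.cong refl)
          fix n' assume "n' \<in> N"
          thus "x n' a = (if n' = n then x n' a else 0)"
            using colim_sub xc na by auto
        qed
        also have "\<dots> = x n a" using fin nN by (simp add: sum.delta')
        finally show False using nz by simp
      qed
    qed
  qed (use cplx in auto)
  have nd: "nondegenerate fscale FV"
    unfolding nondegenerate_def
  proof (intro allI)
    fix p n
    have "S (p + 1) n \<subseteq> insert (nat (p + 1)) (S p n)" by (auto simp: S_def)
    hence "card (S (p + 1) n) \<le> card (insert (nat (p + 1)) (S p n))"
      by (intro card_mono) (auto simp: finS)
    also have "\<dots> \<le> card (S p n) + 1" by (simp add: card_insert_if finS)
    finally show "V.dim (FV (p + 1) n) \<le> V.dim (FV p n) + 1"
      by (simp add: FVspan b_def dim_span_ee finS)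
  qed
  have ab: "adapted_basis fscale FV m (\<lambda>i. int (blk i)) b"
    unfolding adapted_basis_def
  proof (intro conjI)
    show "inj_on b {..<m}" by (simp add: b_def ee_inj)
    show "\<not> V.dependent (b ` {..<m})" by (simp add: b_def ee_indep)
    have bcol: "b i \<in> colim FV (int (blk i))" if "i < m" for i
      unfolding colim_def b_def using that
      by (auto simp: ee_FV S_def intro!: exI[of _ "int i"])
    show "\<forall>i<m. b i \<in> colim FV (int (blk i))" using bcol by auto
    show "V.span (b ` {..<m}) = total_space fscale FV"
      unfolding total_space_def V.span_eq
    proof
      show "b ` {..<m} \<subseteq> V.span (\<Union>n. colim FV n)"
        using bcol by (auto intro: V.span_base)
      have "(\<Union>n. colim FV n) \<subseteq> supp_on {..<m}"
        using colim_sub by (auto simp: supp_on_def)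
      thus "(\<Union>n. colim FV n) \<subseteq> V.span (b ` {..<m})"
        by (simp add: b_def span_ee)
    qed
    show "\<forall>n p. FV p n = V.span (b ` {i. i < m \<and> int (blk i) = n \<and> level FV n (b i) \<le> p})"
    proof (intro allI)
      fix n p
      have "{i. i < m \<and> int (blk i) = n \<and> level FV n (b i) \<le> p} = S p n"
        using level by (auto simp: S_def b_def)
      thus "FV p n = V.span (b ` {i. i < m \<and> int (blk i) = n \<and> level FV n (b i) \<le> p})"
        by (simp add: FVspan)
    qed
    show "\<forall>i j. i \<le> j \<longrightarrow> j < m \<longrightarrow> int (blk i) \<le> int (blk j) \<and> (int (blk i) = int (blk j) \<longrightarrow>
        level FV (int (blk i)) (b i) \<le> level FV (int (blk j)) (b j))"
    proof (intro allI impI conjI)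
      fix i j :: nat assume ij: "i \<le> j" "j < m"
      show "int (blk i) \<le> int (blk j)" using blk_mono ij by auto
      show "level FV (int (blk i)) (b i) \<le> level FV (int (blk j)) (b j)"
        using ij level by (simp add: b_def)
    qed
  qed
  have mat: "d (int (blk j)) (b j) = (\<Sum>i<m. fscale (D i j) (b i))" if "j < m" for j
  proof
    fix a
    have "(\<Sum>i<m. fscale (D i j) (b i)) a = (\<Sum>i<m. if i = a then D i j else 0)"
      unfolding sum_fun_apply by (rule sum.cong) (auto simp: fscale_def b_def ee_def)
    also have "\<dots> = (if a < m then D a j else 0)" by (simp add: sum.delta')
    also have "\<dots> = d (int (blk j)) (b j) a"
    proof (cases "a < m")
      case True
      have "(\<Sum>c<m. D a c * ee j c) = (\<Sum>c<m. if c = j then D a c else 0)"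
        by (rule sum.cong) (auto simp: ee_def)
      thus ?thesis using that True by (simp add: d_def b_def)
    qed (simp add: d_def)
    finally show "d (int (blk j)) (b j) a = (\<Sum>i<m. fscale (D i j) (b i)) a" using that by simp
  qed
  show ?thesis using fc nd ab mat by blast
qed

end
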